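(* For all $s\in\mathbb C\setminus\Lambda$, $\lambda\neq0$ and $A\in\mathbb R$, the secular determinant of the Mathieu–Hankel operator satisfies $\Delta(s;\lambda;A)=\Delta(s;-\lambda;-A)$. Consequently $\mathbf H(-A)$ is unitarily equivalent to $-\mathbf H(A)$. Furthermore, $s\mapsto\Delta(s;\lambda;0)$ is doubly periodic with periods $\omega$ and $i$.
   Context: Fix $T>0$, $\omega=2\pi/T$, $\Lambda=\{\omega n+i(m+\frac12):n,m\in\mathbb Z\}$. For $A\in\mathbb R$, the Mathieu–Hankel operator $\mathbf H(A)$ is the Hankel operator on $L^2(\mathbb R_+)$ with kernel $h_A(t)=p_A(\log t)/t$, $p_A(\xi)=A+\operatorname{Re}(\Gamma(1-i\omega)e^{i\omega\xi})$. For $s\in\mathbb C\setminus\Lambda$, $H(s;A)$ is the trace class operator on $\ell^2(\mathbb Z)$ with matrix $[H(s;A)]_{n,m}=\Gamma(\frac12-i(\omega n+s))\,\mathfrak s_{n-m}\,\Gamma(\frac12+i(\omega m+s))$, where $\mathfrak s_0=A$, $\mathfrak s_{\pm1}=\frac12$, $\mathfrak s_j=0$ otherwise (for real $s=k$ these are the Floquet–Bloch fibers of $\mathbf H(A)$), and $\Delta(s;\lambda;A)=\det(I-\lambda^{-1}H(s;A))$. *)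

theory Defs
  imports "HOL-Analysis.Analysis"
begin

definition mh_omega :: "real \<Rightarrow> real" where
  "mh_omega T = 2 * pi / T"

definition mh_Lambda :: "real \<Rightarrow> complex set" where
  "mh_Lambda T = {complex_of_real (mh_omega T * of_int n) + \<i> * (of_int m + 1/2) | n m :: int. True}"

definition mh_symbol :: "real \<Rightarrow> real \<Rightarrow> real \<Rightarrow> real" where
  "mh_symbol T A \<xi> = A + Re (Gamma (1 - \<i> * complex_of_real (mh_omega T))
                          * exp (\<i> * complex_of_real (mh_omega T * \<xi>)))"

definition mh_kernel :: "real \<Rightarrow> real \<Rightarrow> real \<Rightarrow> real" where
  "mh_kernel T A t = mh_symbol T A (ln t) / t"

definition hankel_op :: "(real \<Rightarrow> real) \<Rightarrow> (real \<Rightarrow> complex) \<Rightarrow> real \<Rightarrow> complex" where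
  "hankel_op h f t = (LINT s:{0<..}|lborel. complex_of_real (h (t + s)) * f s)"

text \<open>Square integrable functions on (0,oo) (values off (0,oo) are irrelevant).\<close>
definition L2pos :: "(real \<Rightarrow> complex) \<Rightarrow> bool" where
  "L2pos f \<longleftrightarrow> f \<in> borel_measurable lborel \<and> set_integrable lborel {0<..} (\<lambda>t. (norm (f t))\<^sup>2)"

definition L2pos_normsq :: "(real \<Rightarrow> complex) \<Rightarrow> real" where
  "L2pos_normsq f = (LINT t:{0<..}|lborel. (norm (f t))\<^sup>2)"

definition ae_eq_pos :: "(real \<Rightarrow> complex) \<Rightarrow> (real \<Rightarrow> complex) \<Rightarrow> bool" where
  "ae_eq_pos f g \<longleftrightarrow> (AE t in lborel. 0 < t \<longrightarrow> f t = g t)"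

definition unitarily_equiv_L2pos ::
  "((real \<Rightarrow> complex) \<Rightarrow> real \<Rightarrow> complex) \<Rightarrow> ((real \<Rightarrow> complex) \<Rightarrow> real \<Rightarrow> complex) \<Rightarrow> bool" where
  "unitarily_equiv_L2pos P Q \<longleftrightarrow>
     (\<exists>U. (\<forall>f. L2pos f \<longrightarrow> L2pos (U f))
        \<and> (\<forall>f g c. L2pos f \<longrightarrow> L2pos g \<longrightarrow>
              ae_eq_pos (U (\<lambda>x. f x + c * g x)) (\<lambda>x. U f x + c * U g x))
        \<and> (\<forall>f. L2pos f \<longrightarrow> L2pos_normsq (U f) = L2pos_normsq f)
        \<and> (\<forall>g. L2pos g \<longrightarrow> (\<exists>f. L2pos f \<and> ae_eq_pos (U f) g))
        \<and> (\<forall>f. L2pos f \<longrightarrow> ae_eq_pos (U (P f)) (Q (U f))))"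

definition mh_sfrak :: "real \<Rightarrow> int \<Rightarrow> complex" where
  "mh_sfrak A j = (if j = 0 then complex_of_real A else if j = 1 \<or> j = -1 then 1/2 else 0)"

definition mh_fiber :: "real \<Rightarrow> complex \<Rightarrow> real \<Rightarrow> int \<Rightarrow> int \<Rightarrow> complex" where
  "mh_fiber T s A n m =
     Gamma (1/2 - \<i> * (complex_of_real (mh_omega T * of_int n) + s))
     * mh_sfrak A (n - m)
     * Gamma (1/2 + \<i> * (complex_of_real (mh_omega T * of_int m) + s))"

definition det_on :: "'a set \<Rightarrow> ('a \<Rightarrow> 'a \<Rightarrow> complex) \<Rightarrow> complex" where
  "det_on S M = (\<Sum>p | p permutes S. of_int (sign p) * (\<Prod>i\<in>S. M i (p i)))"

text \<open>Fredholm determinant det(I - K) of a trace class matrix K on l^2(Z),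
  realised as the limit of the determinants of the finite sections indexed by {-N..N}
  (for trace class K these finite sections converge in trace norm).\<close>
definition fredholm_det_Z :: "(int \<Rightarrow> int \<Rightarrow> complex) \<Rightarrow> complex" where
  "fredholm_det_Z K =
     lim (\<lambda>N::nat. det_on {- int N .. int N} (\<lambda>n m. (if n = m then 1 else 0) - K n m))"

definition mh_Delta :: "real \<Rightarrow> complex \<Rightarrow> complex \<Rightarrow> real \<Rightarrow> complex" where
  "mh_Delta T s lam A = fredholm_det_Z (\<lambda>n m. mh_fiber T s A n m / lam)"

end

theory Submission
  imports Defs "HOL-Combinatorics.Permutations"
begin


lemma permutes_fix_iff:
  assumes "j \<in> S"
  shows "(q permutes S \<and> q j = j) \<longleftrightarrow> q permutes (S - {j})"
  using assms unfolding permutes_def by (auto; metis DiffE DiffI singletonD)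

lemma det_on_insert_tri:
  fixes M :: "'a \<Rightarrow> 'a \<Rightarrow> complex"
  assumes fin: "finite S" and kS: "k \<notin> S" and jS: "j \<in> S" and Mkk: "M k k = 1"
    and zero: "\<And>i. i \<in> S \<Longrightarrow> i \<noteq> j \<Longrightarrow> M k i = 0 \<and> M i k = 0"
  shows "det_on (insert k S) M = det_on S M - M k j * M j k * det_on (S - {j}) M"
proof -
  define F where "F p = of_int (sign p) * (\<Prod>i\<in>insert k S. M i (p i))" for p
  have kj: "k \<noteq> j" using kS jS by auto
  have "det_on (insert k S) M = (\<Sum>c\<in>insert k S. \<Sum>q | q permutes S. F (Transposition.transpose k c \<circ> q))"
    unfolding det_on_def F_def by (rule sum_over_permutations_insert[OF fin kS])
  also have "\<dots> = (\<Sum>q | q permutes S. F q) + (\<Sum>c\<in>S. \<Sum>q | q permutes S. F (Transposition.transpose k c \<circ> q))"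
    using fin kS by simp
  also have "(\<Sum>q | q permutes S. F q) = det_on S M"
    unfolding det_on_def F_def
  proof (rule sum.cong[OF refl])
    fix q assume "q \<in> {q. q permutes S}"
    then have q: "q permutes S" by simp
    have "q k = k" using q kS by (simp add: permutes_not_in)
    then show "of_int (sign q) * (\<Prod>i\<in>insert k S. M i (q i)) = of_int (sign q) * (\<Prod>i\<in>S. M i (q i))"
      using fin kS Mkk by simp
  qed
  also have "(\<Sum>c\<in>S. \<Sum>q | q permutes S. F (Transposition.transpose k c \<circ> q)) = (\<Sum>q | q permutes S. F (Transposition.transpose k j \<circ> q))"
  proof -
    have "(\<Sum>c\<in>S. \<Sum>q | q permutes S. F (Transposition.transpose k c \<circ> q)) =
          (\<Sum>q | q permutes S. F (Transposition.transpose k j \<circ> q)) + (\<Sum>c\<in>S - {j}. \<Sum>q | q permutes S. F (Transposition.transpose k c \<circ> q))"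
      using fin jS by (simp add: sum.remove)
    moreover have "(\<Sum>c\<in>S - {j}. \<Sum>q | q permutes S. F (Transposition.transpose k c \<circ> q)) = 0"
    proof (rule sum.neutral, intro ballI sum.neutral ballI)
      fix c q assume c: "c \<in> S - {j}" and q: "q \<in> {q. q permutes S}"
      have "q k = k" using q kS by (simp add: permutes_not_in)
      then have "(Transposition.transpose k c \<circ> q) k = c" by simp
      then have "M k ((Transposition.transpose k c \<circ> q) k) = 0" using zero c by auto
      then have "(\<Prod>i\<in>insert k S. M i ((Transposition.transpose k c \<circ> q) i)) = 0"
        using fin by (intro prod_zero) auto
      then show "F (Transposition.transpose k c \<circ> q) = 0" unfolding F_def by simp
    qed
    ultimately show ?thesis by simp
  qed
  also have "(\<Sum>q | q permutes S. F (Transposition.transpose k j \<circ> q)) = (\<Sum>q | q permutes S \<and> q j = j. F (Transposition.transpose k j \<circ> q))"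
  proof (rule sum.mono_neutral_right)
    show "finite {q. q permutes S}" using fin by (simp add: finite_permutations)
    show "{q. q permutes S \<and> q j = j} \<subseteq> {q. q permutes S}" by auto
    show "\<forall>q\<in>{q. q permutes S} - {q. q permutes S \<and> q j = j}. F (Transposition.transpose k j \<circ> q) = 0"
    proof
      fix q assume "q \<in> {q. q permutes S} - {q. q permutes S \<and> q j = j}"
      then have q: "q permutes S" and qj: "q j \<noteq> j" by auto
      obtain i where i: "i \<in> S" "q i = j" using q jS by (metis permutes_inverses(1) permutes_not_in)
      have "i \<noteq> j" using i qj by auto
      then have "M i ((Transposition.transpose k j \<circ> q) i) = 0" using i zero by simp
      then have "(\<Prod>i\<in>insert k S. M i ((Transposition.transpose k j \<circ> q) i)) = 0"
        using fin i by (intro prod_zero bexI[where x=i]) auto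
      then show "F (Transposition.transpose k j \<circ> q) = 0" unfolding F_def by simp
    qed
  qed
  also have "\<dots> = (\<Sum>q | q permutes (S - {j}). F (Transposition.transpose k j \<circ> q))"
    using permutes_fix_iff[OF jS] by simp
  also have "\<dots> = (\<Sum>q | q permutes (S - {j}). - (M k j * M j k) * (of_int (sign q) * (\<Prod>i\<in>S - {j}. M i (q i))))"
  proof (rule sum.cong[OF refl])
    fix q assume "q \<in> {q. q permutes (S - {j})}"
    then have q: "q permutes (S - {j})" by simp
    have qk: "q k = k" and qj: "q j = j" using q kS by (auto simp: permutes_not_in)
    have sg: "sign (Transposition.transpose k j \<circ> q) = - sign q"
      using sign_compose[OF permutation_swap_id permutes_imp_permutation[OF _ q]] fin kj
      by (simp add: sign_swap_id)
    have ins: "insert k S = insert k (insert j (S - {j}))" using jS by auto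
    have pr: "(\<Prod>i\<in>insert k S. M i ((Transposition.transpose k j \<circ> q) i)) =
          M k j * M j k * (\<Prod>i\<in>S - {j}. M i ((Transposition.transpose k j \<circ> q) i))"
      apply (subst prod.insert[OF fin kS])
      apply (subst prod.remove[OF fin jS])
      using qk qj kj by (simp add: Transposition.transpose_def)
    have "(\<Prod>i\<in>S - {j}. M i ((Transposition.transpose k j \<circ> q) i)) = (\<Prod>i\<in>S - {j}. M i (q i))"
    proof (rule prod.cong[OF refl])
      fix i assume i: "i \<in> S - {j}"
      then have "q i \<in> S - {j}" using q by (metis permutes_in_image)
      then have "q i \<noteq> k" "q i \<noteq> j" using kS by auto
      then show "M i ((Transposition.transpose k j \<circ> q) i) = M i (q i)" by simp
    qed
    then show "F (Transposition.transpose k j \<circ> q) = - (M k j * M j k) * (of_int (sign q) * (\<Prod>i\<in>S - {j}. M i (q i)))"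
      unfolding F_def sg pr by simp
  qed
  also have "\<dots> = - (M k j * M j k) * det_on (S - {j}) M"
    unfolding det_on_def by (simp add: sum_distrib_left)
  finally show ?thesis by simp
qed




lemma det_on_empty: "det_on {} M = 1"
  unfolding det_on_def by (simp add: permutes_empty)

lemma det_on_insert_iso:
  fixes M :: "'a \<Rightarrow> 'a \<Rightarrow> complex"
  assumes fin: "finite S" and kS: "k \<notin> S" and Mkk: "M k k = 1"
    and zero: "\<And>i. i \<in> S \<Longrightarrow> M k i = 0"
  shows "det_on (insert k S) M = det_on S M"
proof -
  define F where "F p = of_int (sign p) * (\<Prod>i\<in>insert k S. M i (p i))" for p
  have "det_on (insert k S) M = (\<Sum>c\<in>insert k S. \<Sum>q | q permutes S. F (Transposition.transpose k c \<circ> q))"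
    unfolding det_on_def F_def by (rule sum_over_permutations_insert[OF fin kS])
  also have "\<dots> = (\<Sum>q | q permutes S. F q) + (\<Sum>c\<in>S. \<Sum>q | q permutes S. F (Transposition.transpose k c \<circ> q))"
    using fin kS by simp
  also have "(\<Sum>q | q permutes S. F q) = det_on S M"
    unfolding det_on_def F_def
  proof (rule sum.cong[OF refl])
    fix q assume "q \<in> {q. q permutes S}"
    then have q: "q permutes S" by simp
    have "q k = k" using q kS by (simp add: permutes_not_in)
    then show "of_int (sign q) * (\<Prod>i\<in>insert k S. M i (q i)) = of_int (sign q) * (\<Prod>i\<in>S. M i (q i))"
      using fin kS Mkk by simp
  qed
  also have "(\<Sum>c\<in>S. \<Sum>q | q permutes S. F (Transposition.transpose k c \<circ> q)) = 0"
  proof (rule sum.neutral, intro ballI sum.neutral ballI)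
    fix c q assume c: "c \<in> S" and q: "q \<in> {q. q permutes S}"
    have "q k = k" using q kS by (simp add: permutes_not_in)
    then have "(Transposition.transpose k c \<circ> q) k = c" by simp
    then have "M k ((Transposition.transpose k c \<circ> q) k) = 0" using zero c by auto
    then have "(\<Prod>i\<in>insert k S. M i ((Transposition.transpose k c \<circ> q) i)) = 0"
      using fin by (intro prod_zero bexI[where x=k]) auto
    then show "F (Transposition.transpose k c \<circ> q) = 0" unfolding F_def by simp
  qed
  finally show ?thesis by simp
qed

lemma det_on_similar:
  fixes M :: "'a \<Rightarrow> 'a \<Rightarrow> complex"
  assumes fin: "finite S" and d: "\<And>i. d i \<noteq> 0"
  shows "det_on S (\<lambda>i j. d i * M i j / d j) = det_on S M"
  unfolding det_on_def
proof (rule sum.cong[OF refl])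
  fix p assume "p \<in> {p. p permutes S}"
  then have p: "p permutes S" by simp
  have pp: "(\<Prod>i\<in>S. d (p i)) = (\<Prod>i\<in>S. d i)"
    using prod.permute[OF p, of d] by (simp add: comp_def)
  have nz: "(\<Prod>i\<in>S. d i) \<noteq> 0" using d fin by simp
  have "(\<Prod>i\<in>S. d i * M i (p i) / d (p i)) = (\<Prod>i\<in>S. d i) * (\<Prod>i\<in>S. M i (p i)) / (\<Prod>i\<in>S. d (p i))"
    by (simp add: prod.distrib prod_dividef)
  also have "\<dots> = (\<Prod>i\<in>S. M i (p i))" using pp nz by simp
  finally show "of_int (sign p) * (\<Prod>i\<in>S. d i * M i (p i) / d (p i)) = of_int (sign p) * (\<Prod>i\<in>S. M i (p i))"
    by simp
qed

definition tri :: "(int \<Rightarrow> int \<Rightarrow> complex) \<Rightarrow> bool" where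
  "tri M \<longleftrightarrow> (\<forall>i. M i i = 1) \<and> (\<forall>i j. \<bar>i - j\<bar> > 1 \<longrightarrow> M i j = 0)"

lemma tri_right:
  assumes "tri M" "a < b"
  shows "det_on {a..b} M = det_on {a..b-1} M - M b (b-1) * M (b-1) b * det_on {a..b-2} M"
proof -
  have "det_on (insert b {a..b-1}) M = det_on {a..b-1} M - M b (b-1) * M (b-1) b * det_on ({a..b-1} - {b-1}) M"
    using assms by (intro det_on_insert_tri) (auto simp: tri_def)
  moreover have "insert b {a..b-1} = {a..b}" using assms by auto
  moreover have "{a..b-1} - {b-1} = {a..b-2}" by auto
  ultimately show ?thesis by simp
qed

lemma tri_left:
  assumes "tri M" "a < b"
  shows "det_on {a..b} M = det_on {a+1..b} M - M a (a+1) * M (a+1) a * det_on {a+2..b} M"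
proof -
  have "det_on (insert a {a+1..b}) M = det_on {a+1..b} M - M a (a+1) * M (a+1) a * det_on ({a+1..b} - {a+1}) M"
    using assms by (intro det_on_insert_tri) (auto simp: tri_def)
  moreover have "insert a {a+1..b} = {a..b}" using assms by auto
  moreover have "{a+1..b} - {a+1} = {a+2..b}" by auto
  ultimately show ?thesis by simp
qed

lemma tri_single: "tri M \<Longrightarrow> det_on {a..a} M = 1"
  using det_on_insert_iso[of "{}" a M] by (simp add: tri_def det_on_empty)

lemma tri_small:
  assumes "tri M" "b \<le> a"
  shows "det_on {a..b} M = 1"
proof (cases "b = a")
  case True then show ?thesis using tri_single[OF assms(1)] by simp
next
  case False then have "{a..b} = {}" using assms by auto
  then show ?thesis by (simp add: det_on_empty)
qed

lemma tri_bound: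
  assumes "tri M"
  shows "cmod (det_on {a..b} M) \<le> (\<Prod>k\<in>{a..<b}. 1 + cmod (M k (k+1) * M (k+1) k))"
proof (induction "nat (b - a)" arbitrary: b rule: less_induct)
  case less
  define P where "P b = (\<Prod>k\<in>{a..<b}. 1 + cmod (M k (k+1) * M (k+1) k))" for b
  have P1: "P c \<ge> 1" for c unfolding P_def by (intro prod_ge_1) auto
  have Pstep: "P (c+1) = P c * (1 + cmod (M c (c+1) * M (c+1) c))" if "a \<le> c" for c
  proof -
    have "{a..<c+1} = insert c {a..<c}" using that by auto
    then show ?thesis unfolding P_def by simp
  qed
  show ?case
  proof (cases "b \<le> a")
    case True
    then have "{a..<b} = {}" by auto
    then show ?thesis using tri_small[OF assms True] by simp
  next
    case False
    then have ab: "a < b" by simp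
    have ih1: "cmod (det_on {a..b-1} M) \<le> P (b-1)"
      using less[of "b-1"] ab unfolding P_def by simp
    have ih2: "cmod (det_on {a..b-2} M) \<le> P (b-2)"
      using less[of "b-2"] ab unfolding P_def by simp
    have P21: "P (b-2) \<le> P (b-1)"
    proof (cases "a \<le> b - 2")
      case True
      have "P (b-1) = P (b-2) * (1 + cmod (M (b-2) (b-2+1) * M (b-2+1) (b-2)))"
        using Pstep[OF True] by simp
      moreover have "P (b-2) \<ge> 0" using P1[of "b-2"] by simp
      ultimately show ?thesis by (simp add: mult_le_cancel_left1 norm_ge_zero)
    next
      case False
      then have "{a..<b-2} = {}" by auto
      then show ?thesis using P1[of "b-1"] unfolding P_def by simp
    qed
    let ?e = "cmod (M b (b-1) * M (b-1) b)"
    have "cmod (det_on {a..b} M) \<le> cmod (det_on {a..b-1} M) + cmod (M b (b-1) * M (b-1) b) * cmod (det_on {a..b-2} M)"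
      unfolding tri_right[OF assms ab] by (metis norm_mult norm_triangle_ineq4)
    also have "\<dots> \<le> P (b-1) + ?e * P (b-2)"
      using ih1 ih2 by (intro add_mono mult_left_mono) auto
    also have "\<dots> \<le> P (b-1) + ?e * P (b-1)"
      using P21 by (intro add_mono mult_left_mono) auto
    also have "\<dots> = P (b-1+1)" using Pstep[of "b-1"] ab by (simp add: algebra_simps mult.commute)
    finally show ?thesis unfolding P_def by simp
  qed
qed

lemma tri_shift:
  assumes "tri M" "tri M'" "\<And>i j. M' i j = M (i+1) (j+1)"
  shows "det_on {a..b} M' = det_on {a+1..b+1} M"
proof (induction "nat (b - a)" arbitrary: b rule: less_induct)
  case less
  show ?case
  proof (cases "b \<le> a")
    case True then show ?thesis using tri_small[OF assms(1)] tri_small[OF assms(2)] by simp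
  next
    case False
    then have ab: "a < b" by simp
    have "det_on {a..b} M' = det_on {a..b-1} M' - M' b (b-1) * M' (b-1) b * det_on {a..b-2} M'"
      by (rule tri_right[OF assms(2) ab])
    also have "det_on {a..b-1} M' = det_on {a+1..b-1+1} M" using less[of "b-1"] ab by simp
    also have "det_on {a..b-2} M' = det_on {a+1..b-2+1} M" using less[of "b-2"] ab by simp
    also have "det_on {a+1..b-1+1} M - M' b (b-1) * M' (b-1) b * det_on {a+1..b-2+1} M = det_on {a+1..b+1} M"
      using tri_right[OF assms(1), of "a+1" "b+1"] ab assms(3) by (simp add: algebra_simps)
    finally show ?thesis .
  qed
qed

lemma lim_eq_if_diff:
  fixes X Y :: "nat \<Rightarrow> 'a::real_normed_vector"
  assumes "(\<lambda>n. X n - Y n) \<longlonglongrightarrow> 0"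
  shows "lim X = lim Y"
proof -
  have "(X \<longlonglongrightarrow> L) \<longleftrightarrow> (Y \<longlonglongrightarrow> L)" for L
  proof
    assume "X \<longlonglongrightarrow> L"
    from tendsto_diff[OF this assms] show "Y \<longlonglongrightarrow> L" by simp
  next
    assume "Y \<longlonglongrightarrow> L"
    from tendsto_add[OF this assms] show "X \<longlonglongrightarrow> L" by simp
  qed
  then show ?thesis unfolding lim_def by simp
qed




definition MD :: "real \<Rightarrow> complex \<Rightarrow> complex \<Rightarrow> real \<Rightarrow> int \<Rightarrow> int \<Rightarrow> complex" where
  "MD T s lam A n m = (if n = m then 1 else 0) - mh_fiber T s A n m / lam"

lemma mh_Delta_MD: "mh_Delta T s lam A = lim (\<lambda>N. det_on {- int N .. int N} (MD T s lam A))"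
  unfolding mh_Delta_def fredholm_det_Z_def MD_def by simp

definition sgnZ :: "int \<Rightarrow> complex" where "sgnZ n = (if even n then 1 else -1)"

lemma sgnZ_nz: "sgnZ n \<noteq> 0" by (simp add: sgnZ_def)

lemma MD_neg: "MD T s (-lam) (-A) n m = sgnZ n * MD T s lam A n m / sgnZ m"
proof -
  consider "n = m" | "n - m = 1 \<or> n - m = -1" | "n \<noteq> m \<and> n - m \<noteq> 1 \<and> n - m \<noteq> -1" by blast
  then show ?thesis
  proof cases
    case 1 then show ?thesis by (simp add: MD_def mh_fiber_def mh_sfrak_def sgnZ_def)
  next
    case 2
    then have "even n \<longleftrightarrow> \<not> even m" by (auto; presburger)
    with 2 show ?thesis by (auto simp: MD_def mh_fiber_def mh_sfrak_def sgnZ_def)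
  next
    case 3 then show ?thesis by (simp add: MD_def mh_fiber_def mh_sfrak_def)
  qed
qed

lemma part1: "mh_Delta T s lam A = mh_Delta T s (- lam) (- A)"
proof -
  have "det_on {- int N .. int N} (MD T s (-lam) (-A)) = det_on {- int N .. int N} (MD T s lam A)" for N
    unfolding MD_neg by (rule det_on_similar) (auto simp: sgnZ_nz)
  then show ?thesis unfolding mh_Delta_MD by simp
qed

lemma tri_MD0: "tri (MD T s lam 0)"
  unfolding tri_def MD_def mh_fiber_def mh_sfrak_def by auto

lemma MD_shift: "MD T (s + complex_of_real (mh_omega T)) lam A n m = MD T s lam A (n+1) (m+1)"
  unfolding MD_def mh_fiber_def by (simp add: algebra_simps)

lemma Lambda_memI: "s = complex_of_real (mh_omega T * of_int n) + \<i> * (of_int m + 1/2) \<Longrightarrow> s \<in> mh_Lambda T"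
  unfolding mh_Lambda_def by blast

lemma not_nonpos1:
  assumes "s \<notin> mh_Lambda T"
  shows "1/2 - \<i> * (complex_of_real (mh_omega T * of_int n) + s) \<notin> \<int>\<^sub>\<le>\<^sub>0"
proof
  assume "1/2 - \<i> * (complex_of_real (mh_omega T * of_int n) + s) \<in> \<int>\<^sub>\<le>\<^sub>0"
  then obtain k :: nat where k: "1/2 - \<i> * (complex_of_real (mh_omega T * of_int n) + s) = - of_nat k"
    by (auto elim!: nonpos_Ints_cases')
  have "s = complex_of_real (mh_omega T * of_int (-n)) + \<i> * (of_int (- int k - 1) + 1/2)"
    using k by (auto simp: complex_eq_iff)
  then show False using assms Lambda_memI by blast
qed

lemma not_nonpos2:
  assumes "s \<notin> mh_Lambda T"
  shows "- (1/2 - \<i> * (complex_of_real (mh_omega T * of_int n) + s)) \<notin> \<int>\<^sub>\<le>\<^sub>0"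
proof
  assume "- (1/2 - \<i> * (complex_of_real (mh_omega T * of_int n) + s)) \<in> \<int>\<^sub>\<le>\<^sub>0"
  then obtain k :: nat where k: "- (1/2 - \<i> * (complex_of_real (mh_omega T * of_int n) + s)) = - of_nat k"
    by (auto elim!: nonpos_Ints_cases')
  have "s = complex_of_real (mh_omega T * of_int (-n)) + \<i> * (of_int (int k - 1) + 1/2)"
    using k by (auto simp: complex_eq_iff)
  then show False using assms Lambda_memI by blast
qed




definition aa :: "real \<Rightarrow> complex \<Rightarrow> int \<Rightarrow> complex" where
  "aa T s n = 1/2 - \<i> * (complex_of_real (mh_omega T * of_int n) + s)"

lemma aa_nz: "s \<notin> mh_Lambda T \<Longrightarrow> aa T s n \<noteq> 0"
proof
  assume "s \<notin> mh_Lambda T" "aa T s n = 0"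
  then show False using not_nonpos1[of s T n] unfolding aa_def by (metis zero_in_nonpos_Ints)
qed

lemma G1: assumes "s \<notin> mh_Lambda T"
  shows "Gamma (1/2 - \<i> * (complex_of_real (mh_omega T * of_int n) + (s + \<i>))) = aa T s n * Gamma (aa T s n)"
proof -
  have "1/2 - \<i> * (complex_of_real (mh_omega T * of_int n) + (s + \<i>)) = aa T s n + 1"
    unfolding aa_def by (simp add: algebra_simps)
  then show ?thesis using Gamma_plus1[OF not_nonpos1[OF assms, of n]] unfolding aa_def by simp
qed

lemma G2: assumes "s \<notin> mh_Lambda T"
  shows "Gamma (1/2 + \<i> * (complex_of_real (mh_omega T * of_int n) + (s + \<i>))) = Gamma (1 - aa T s n) / (- aa T s n)"
proof -
  have e1: "1/2 + \<i> * (complex_of_real (mh_omega T * of_int n) + (s + \<i>)) = - aa T s n"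
    unfolding aa_def by (simp add: algebra_simps)
  have "Gamma (- aa T s n + 1) = (- aa T s n) * Gamma (- aa T s n)"
    using Gamma_plus1[OF not_nonpos2[OF assms, of n]] unfolding aa_def by simp
  then have "Gamma (- aa T s n) = Gamma (1 - aa T s n) / (- aa T s n)"
    using aa_nz[OF assms, of n] by (simp add: field_simps)
  then show ?thesis using e1 by simp
qed

lemma G3: "1/2 + \<i> * (complex_of_real (mh_omega T * of_int n) + s) = 1 - aa T s n"
  unfolding aa_def by simp

lemma MD_ishift:
  assumes s: "s \<notin> mh_Lambda T"
  shows "MD T (s + \<i>) lam 0 n m = (sgnZ n * aa T s n) * MD T s lam 0 n m / (sgnZ m * aa T s m)"
proof -
  have an: "aa T s n \<noteq> 0" and am: "aa T s m \<noteq> 0" using aa_nz[OF s] by auto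
  consider "n = m" | "n - m = 1 \<or> n - m = -1" | "n \<noteq> m \<and> n - m \<noteq> 1 \<and> n - m \<noteq> -1" by blast
  then show ?thesis
  proof cases
    case 1 then show ?thesis using an by (simp add: MD_def mh_fiber_def mh_sfrak_def sgnZ_def)
  next
    case 2
    then have par: "sgnZ n / sgnZ m = -1" unfolding sgnZ_def by (auto; presburger)
    have sf: "mh_sfrak 0 (n - m) = 1/2" using 2 by (auto simp: mh_sfrak_def)
    have L: "MD T (s + \<i>) lam 0 n m = - (aa T s n * Gamma (aa T s n) * (1/2) * (Gamma (1 - aa T s m) / (- aa T s m))) / lam"
      using 2 unfolding MD_def mh_fiber_def G1[OF s] G2[OF s] sf by auto
    have R: "MD T s lam 0 n m = - (Gamma (aa T s n) * (1/2) * Gamma (1 - aa T s m)) / lam"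
      using 2 unfolding MD_def mh_fiber_def sf G3 by (auto simp: aa_def)
    have "(sgnZ n * aa T s n) * MD T s lam 0 n m / (sgnZ m * aa T s m)
          = (sgnZ n / sgnZ m) * (aa T s n / aa T s m) * MD T s lam 0 n m"
      by (simp add: field_simps)
    also have "\<dots> = MD T (s + \<i>) lam 0 n m" unfolding par L R using am
      by (simp add: field_simps)
    finally show ?thesis by simp
  next
    case 3 then show ?thesis by (simp add: MD_def mh_fiber_def mh_sfrak_def)
  qed
qed

lemma part3i:
  assumes s: "s \<notin> mh_Lambda T"
  shows "mh_Delta T (s + \<i>) lam 0 = mh_Delta T s lam 0"
proof -
  have "det_on {- int N .. int N} (MD T (s + \<i>) lam 0) = det_on {- int N .. int N} (MD T s lam 0)" for N
    unfolding MD_ishift[OF s] by (rule det_on_similar) (auto simp: sgnZ_nz aa_nz[OF s])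
  then show ?thesis unfolding mh_Delta_MD by simp
qed




lemma sin_lower: "exp \<bar>Im u\<bar> - 1 \<le> 2 * cmod (sin u)"
proof -
  have "sin u = (exp (\<i> * u) - exp (-(\<i> * u))) / (2 * \<i>)" by (rule sin_exp_eq)
  then have "2 * cmod (sin u) = cmod (exp (\<i> * u) - exp (-(\<i> * u)))"
    by (simp add: norm_divide norm_mult)
  moreover have "\<bar>cmod (exp (\<i> * u)) - cmod (exp (-(\<i> * u)))\<bar> \<le> cmod (exp (\<i> * u) - exp (-(\<i> * u)))"
    by (rule norm_triangle_ineq3)
  moreover have "cmod (exp (\<i> * u)) = exp (- Im u)" "cmod (exp (-(\<i> * u))) = exp (Im u)" by simp_all
  moreover have "exp \<bar>Im u\<bar> - 1 \<le> \<bar>exp (- Im u) - exp (Im u)\<bar>"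
  proof (cases "Im u \<ge> 0")
    case True
    then have "exp (- Im u) \<le> 1" by simp
    then show ?thesis using True by simp
  next
    case False
    then have "exp (Im u) \<le> 1" by simp
    then show ?thesis using False by simp
  qed
  ultimately show ?thesis by linarith
qed

lemma exp_pi_ge2: "2 \<le> exp pi"
proof -
  have "1 + pi \<le> exp pi" by (rule exp_ge_add_one_self)
  then show ?thesis using pi_gt3 by linarith
qed

definition tt :: "real \<Rightarrow> complex \<Rightarrow> int \<Rightarrow> complex" where
  "tt T s k = Gamma (aa T s k) * Gamma (1 - aa T s k)"

lemma tt_bound:
  assumes "1 \<le> \<bar>mh_omega T * of_int k + Re s\<bar>"
  shows "cmod (tt T s k) \<le> 4 * pi * exp (- pi * \<bar>mh_omega T * of_int k + Re s\<bar>)"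
proof -
  define X where "X = \<bar>mh_omega T * of_int k + Re s\<bar>"
  have X1: "1 \<le> X" using assms unfolding X_def .
  have tt: "tt T s k = of_real pi / sin (of_real pi * aa T s k)"
    unfolding tt_def by (rule Gamma_reflection_complex)
  have im0: "Im (of_real pi * aa T s k) = - (pi * (mh_omega T * of_int k + Re s))"
    unfolding aa_def by (simp add: algebra_simps)
  have im: "\<bar>Im (of_real pi * aa T s k)\<bar> = pi * X"
    unfolding im0 X_def abs_minus_cancel abs_mult by simp
  define E where "E = exp (pi * X)"
  have "pi * 1 \<le> pi * X" using X1 by (intro mult_left_mono) auto
  then have "exp pi \<le> E" unfolding E_def by simp
  then have E2: "2 \<le> E" using exp_pi_ge2 by linarith
  have sl: "E - 1 \<le> 2 * cmod (sin (of_real pi * aa T s k))"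
    using sin_lower[of "of_real pi * aa T s k"] unfolding im E_def .
  then have sl2: "E / 4 \<le> cmod (sin (of_real pi * aa T s k))" using E2 by linarith
  have Epos: "0 < E" unfolding E_def by simp
  have sp: "0 < cmod (sin (of_real pi * aa T s k))" using sl2 Epos by linarith
  have "cmod (tt T s k) = pi / cmod (sin (of_real pi * aa T s k))"
    unfolding tt by (simp add: norm_divide)
  also have "\<dots> \<le> pi / (E / 4)"
    using sl2 Epos sp by (intro divide_left_mono) auto
  also have "\<dots> = 4 * pi / E" by simp
  also have "1 / E = exp (- pi * X)" unfolding E_def by (simp add: exp_minus inverse_eq_divide)
  then have "4 * pi / E = 4 * pi * exp (- pi * X)" by (metis times_divide_eq_right mult_1_right)
  finally show ?thesis unfolding X_def .
qed

lemma tt_bound2: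
  assumes om: "0 < mh_omega T" and j: "1 \<le> mh_omega T * real j - \<bar>Re s\<bar>" and k: "int j \<le> \<bar>k\<bar>"
  shows "cmod (tt T s k) \<le> (4 * pi * exp (pi * \<bar>Re s\<bar>)) * exp (- pi * mh_omega T) ^ j"
proof -
  have "mh_omega T * real j \<le> mh_omega T * \<bar>of_int k\<bar>" using k om by simp
  also have "mh_omega T * \<bar>of_int k\<bar> \<le> \<bar>mh_omega T * of_int k + Re s\<bar> + \<bar>Re s\<bar>"
    using om by (simp add: abs_mult)
  finally have X: "mh_omega T * real j - \<bar>Re s\<bar> \<le> \<bar>mh_omega T * of_int k + Re s\<bar>" by simp
  have "cmod (tt T s k) \<le> 4 * pi * exp (- pi * \<bar>mh_omega T * of_int k + Re s\<bar>)"
    using tt_bound X j by force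
  also have "\<dots> \<le> 4 * pi * exp (- pi * (mh_omega T * real j - \<bar>Re s\<bar>))"
    using X by simp
  also have "exp (- pi * (mh_omega T * real j - \<bar>Re s\<bar>)) = exp (pi * \<bar>Re s\<bar>) * exp (- pi * mh_omega T) ^ j"
    by (simp add: exp_of_nat_mult[symmetric] exp_add[symmetric] algebra_simps)
  finally show ?thesis by (simp add: mult_ac)
qed

lemma MD_adj1: "MD T s lam 0 k (k+1) = - (Gamma (aa T s k) * (1/2) * Gamma (1 - aa T s (k+1))) / lam"
proof -
  show ?thesis unfolding MD_def mh_fiber_def G3 aa_def by (simp add: mh_sfrak_def)
qed

lemma MD_adj2: "MD T s lam 0 (k+1) k = - (Gamma (aa T s (k+1)) * (1/2) * Gamma (1 - aa T s k)) / lam"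
proof -
  show ?thesis unfolding MD_def mh_fiber_def G3 aa_def by (simp add: mh_sfrak_def)
qed

lemma e_eq:
  "MD T s lam 0 k (k+1) * MD T s lam 0 (k+1) k = tt T s k * tt T s (k+1) / (4 * lam^2)"
  unfolding MD_adj1 MD_adj2 tt_def by (simp add: power2_eq_square mult_ac)




lemma sum_sym_int: "(\<Sum>k\<in>{- int N..<int N}. f k) = (\<Sum>j<N. f (int j) + f (- int j - 1))"
proof (induction N)
  case 0 then show ?case by simp
next
  case (Suc N)
  have "{- int (Suc N)..<int (Suc N)} = insert (- int N - 1) (insert (int N) {- int N..<int N})" by auto
  then have "(\<Sum>k\<in>{- int (Suc N)..<int (Suc N)}. f k) = f (- int N - 1) + (f (int N) + (\<Sum>k\<in>{- int N..<int N}. f k))"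
    by simp
  then show ?case using Suc by (simp add: add_ac)
qed

lemma prod_le_exp_sum:
  fixes f :: "'a \<Rightarrow> real"
  assumes "finite A" "\<And>k. k \<in> A \<Longrightarrow> 0 \<le> f k"
  shows "(\<Prod>k\<in>A. 1 + f k) \<le> exp (\<Sum>k\<in>A. f k)"
  unfolding exp_sum[OF assms(1)] apply (rule prod_mono) using assms by auto

lemma part3w:
  assumes om: "0 < mh_omega T" and lam: "lam \<noteq> 0"
  shows "mh_Delta T (s + complex_of_real (mh_omega T)) lam 0 = mh_Delta T s lam 0"
proof -
  define M where "M = MD T s lam 0"
  define e where "e k = M k (k+1) * M (k+1) k" for k
  define g where "g j = cmod (e (int j)) + cmod (e (- int j - 1))" for j
  define B where "B = 4 * pi * exp (pi * \<bar>Re s\<bar>)"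
  define \<rho> where "\<rho> = exp (- pi * mh_omega T)"
  define C where "C = B * B / (4 * cmod lam ^ 2)"
  have triM: "tri M" unfolding M_def by (rule tri_MD0)
  have Bpos: "0 \<le> B" unfolding B_def by simp
  have rho: "0 \<le> \<rho>" "\<rho> < 1" unfolding \<rho>_def using om by auto
  have ebound: "cmod (e k) \<le> C * (\<rho> * \<rho>) ^ j"
    if j: "1 \<le> mh_omega T * real j - \<bar>Re s\<bar>" and k1: "int j \<le> \<bar>k\<bar>" and k2: "int j \<le> \<bar>k+1\<bar>" for j k
  proof -
    have t1: "cmod (tt T s k) \<le> B * \<rho> ^ j" using tt_bound2[OF om j k1] unfolding B_def \<rho>_def .
    have t2: "cmod (tt T s (k+1)) \<le> B * \<rho> ^ j" using tt_bound2[OF om j k2] unfolding B_def \<rho>_def .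
    have "cmod (e k) = cmod (tt T s k) * cmod (tt T s (k+1)) / (4 * cmod lam ^ 2)"
      unfolding e_def M_def e_eq by (simp add: norm_mult norm_divide norm_power)
    also have "\<dots> \<le> (B * \<rho> ^ j) * (B * \<rho> ^ j) / (4 * cmod lam ^ 2)"
      using t1 t2 Bpos rho by (intro divide_right_mono mult_mono) auto
    also have "\<dots> = C * (\<rho> * \<rho>) ^ j" unfolding C_def by (simp add: power_mult_distrib)
    finally show ?thesis .
  qed
  obtain J :: nat where J: "1 + \<bar>Re s\<bar> \<le> mh_omega T * real J"
  proof -
    obtain J :: nat where "(1 + \<bar>Re s\<bar>) / mh_omega T \<le> real J" using real_arch_simple by blast
    then have "1 + \<bar>Re s\<bar> \<le> mh_omega T * real J" using om by (simp add: field_simps)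
    then show ?thesis using that by blast
  qed
  have gev: "eventually (\<lambda>j. norm (g j) \<le> 2 * C * (\<rho> * \<rho>) ^ j) sequentially"
    using eventually_ge_at_top[of J]
  proof eventually_elim
    case (elim j)
    have jj: "1 \<le> mh_omega T * real j - \<bar>Re s\<bar>"
      using J elim om by (smt (verit, best) mult_left_mono of_nat_le_iff)
    have "cmod (e (int j)) \<le> C * (\<rho> * \<rho>) ^ j" by (rule ebound[OF jj]) auto
    moreover have "cmod (e (- int j - 1)) \<le> C * (\<rho> * \<rho>) ^ j" by (rule ebound[OF jj]) auto
    ultimately show ?case unfolding g_def by simp
  qed
  have gsum: "summable g"
  proof (rule summable_comparison_test_ev[OF gev])
    have "\<rho> * \<rho> \<le> 1 * \<rho>" using rho by (intro mult_right_mono) auto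
    then have "norm (\<rho> * \<rho>) < 1" using rho by (simp add: abs_mult)
    then have "summable (\<lambda>j. (\<rho> * \<rho>) ^ j)" by (rule summable_geometric)
    then show "summable (\<lambda>j. 2 * C * (\<rho> * \<rho>) ^ j)" by (rule summable_mult)
  qed
  have g0: "\<And>j. 0 \<le> g j" unfolding g_def by simp
  define G where "G = suminf g"
  have Dbound: "cmod (det_on {a..b} M) \<le> exp G" if "- int N \<le> a" "b \<le> int N" for a b N
  proof -
    have "cmod (det_on {a..b} M) \<le> (\<Prod>k\<in>{a..<b}. 1 + cmod (e k))"
      using tri_bound[OF triM] unfolding e_def .
    also have "\<dots> \<le> exp (\<Sum>k\<in>{a..<b}. cmod (e k))" by (rule prod_le_exp_sum) auto
    also have "(\<Sum>k\<in>{a..<b}. cmod (e k)) \<le> (\<Sum>k\<in>{- int N..<int N}. cmod (e k))"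
      using that by (intro sum_mono2) auto
    also have "\<dots> = (\<Sum>j<N. g j)" unfolding sum_sym_int g_def ..
    also have "\<dots> \<le> G" unfolding G_def using gsum g0 by (intro sum_le_suminf) auto
    finally show ?thesis by simp
  qed
  define X where "X N = det_on {- int N .. int N} (MD T (s + complex_of_real (mh_omega T)) lam 0)" for N
  define Y where "Y N = det_on {- int N .. int N} M" for N
  have XY: "X N = det_on {- int N + 1 .. int N + 1} M" for N
    unfolding X_def M_def by (rule tri_shift[OF tri_MD0 tri_MD0 MD_shift])
  have diff: "norm (X N - Y N) \<le> (g (N - 1) + g N) * exp G" if N: "1 \<le> N" for N
  proof -
    define n where "n = int N"
    have n1: "1 \<le> n" using N unfolding n_def by simp
    have L: "Y N = det_on {-n+1..n} M - e (-n) * det_on {-n+2..n} M"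
      unfolding Y_def n_def[symmetric] e_def using tri_left[OF triM, of "-n" n] n1 by simp
    have R: "X N = det_on {-n+1..n} M - e n * det_on {-n+1..n-1} M"
      unfolding XY n_def[symmetric] e_def using tri_right[OF triM, of "-n+1" "n+1"] n1
      by (simp add: mult.commute)
    have XY_diff: "X N - Y N = e (-n) * det_on {-n+2..n} M - e n * det_on {-n+1..n-1} M"
      unfolding L R by simp
    have e1: "cmod (e (-n)) \<le> g (N - 1)"
    proof -
      have "- int (N - 1) - 1 = -n" using N unfolding n_def by simp
      then show ?thesis unfolding g_def by simp
    qed
    have e2: "cmod (e n) \<le> g N" unfolding g_def n_def by simp
    have "norm (X N - Y N) \<le> cmod (e (-n)) * cmod (det_on {-n+2..n} M) + cmod (e n) * cmod (det_on {-n+1..n-1} M)"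
      unfolding XY_diff by (metis norm_mult norm_triangle_ineq4)
    also have "\<dots> \<le> g (N - 1) * exp G + g N * exp G"
      using Dbound[of N "-n+2" n] Dbound[of N "-n+1" "n-1"] e1 e2 g0 unfolding n_def
      by (intro add_mono mult_mono) auto
    finally show ?thesis by (simp add: algebra_simps)
  qed
  have g_lim: "g \<longlonglongrightarrow> 0" by (rule summable_LIMSEQ_zero[OF gsum])
  have g1_lim: "(\<lambda>N. g (N - 1)) \<longlonglongrightarrow> 0" by (rule LIMSEQ_imp_Suc) (simp add: g_lim)
  have "(\<lambda>N. (g (N - 1) + g N) * exp G) \<longlonglongrightarrow> (0 + 0) * exp G"
    by (intro tendsto_intros g_lim g1_lim)
  then have lim0: "(\<lambda>N. (g (N - 1) + g N) * exp G) \<longlonglongrightarrow> 0" by simp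
  have "(\<lambda>N. X N - Y N) \<longlonglongrightarrow> 0"
    by (rule Lim_null_comparison[OF eventually_mono[OF eventually_ge_at_top[of "1::nat"] diff] lim0])
  then have "lim X = lim Y" by (rule lim_eq_if_diff)
  then show ?thesis unfolding mh_Delta_MD X_def Y_def M_def by simp
qed




lemma kernel_flip:
  assumes om: "0 < mh_omega T" and x: "0 < x"
  shows "mh_kernel T (-A) (exp (pi / mh_omega T) * x) = - mh_kernel T A x / exp (pi / mh_omega T)"
proof -
  define c where "c = exp (pi / mh_omega T)"
  define G where "G = Gamma (1 - \<i> * complex_of_real (mh_omega T))"
  have lnc: "ln (c * x) = pi / mh_omega T + ln x" unfolding c_def using x by (simp add: ln_mult)
  have "mh_omega T * (pi / mh_omega T + ln x) = pi + mh_omega T * ln x"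
    using om by (simp add: field_simps)
  then have "exp (\<i> * complex_of_real (mh_omega T * (pi / mh_omega T + ln x)))
       = - exp (\<i> * complex_of_real (mh_omega T * ln x))"
    by (simp add: distrib_left exp_add)
  then have "mh_symbol T (-A) (ln (c * x)) = - mh_symbol T A (ln x)"
    unfolding lnc mh_symbol_def G_def[symmetric] by simp
  then show ?thesis unfolding mh_kernel_def c_def[symmetric] using x
    by (simp add: field_simps)
qed

lemma L2pos_scale:
  assumes c: "0 < c" and f: "L2pos f"
  shows "L2pos (\<lambda>t. complex_of_real a * f (c * t))"
proof -
  have fm: "f \<in> borel_measurable borel" using f unfolding L2pos_def by simp
  have m: "(\<lambda>t. complex_of_real a * f (c * t)) \<in> borel_measurable lborel"
    using fm by simp
  define h where "h y = indicator {0<..} y *\<^sub>R (norm (f y))\<^sup>2" for y :: real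
  have hi: "integrable lborel h" using f unfolding L2pos_def set_integrable_def h_def by simp
  have I: "integrable lborel (\<lambda>x. h (0 + c * x))"
    using lborel_integrable_real_affine[OF hi, of c 0] c by simp
  have I2: "integrable lborel (\<lambda>x. (a * a) *\<^sub>R h (0 + c * x))"
    by (rule integrable_scaleR_right) (rule I)
  have eq: "(\<lambda>x. (a * a) *\<^sub>R h (0 + c * x)) = (\<lambda>x. indicator {0<..} x *\<^sub>R (norm (complex_of_real a * f (c * x)))\<^sup>2)"
    using c by (auto simp: h_def indicator_def norm_mult power2_eq_square zero_less_mult_iff)
  show ?thesis using m I2 unfolding L2pos_def set_integrable_def eq by simp
qed

lemma normsq_scale:
  assumes c: "0 < c"
  shows "L2pos_normsq (\<lambda>t. complex_of_real (sqrt c) * f (c * t)) = L2pos_normsq f"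
proof -
  define h where "h y = indicator {0<..} y *\<^sub>R (norm (f y))\<^sup>2" for y :: real
  have "L2pos_normsq f = integral\<^sup>L lborel h" unfolding L2pos_normsq_def set_lebesgue_integral_def h_def ..
  also have "\<dots> = \<bar>c\<bar> *\<^sub>R integral\<^sup>L lborel (\<lambda>x. h (0 + c * x))"
    by (rule lborel_integral_real_affine) (use c in simp)
  also have "\<dots> = integral\<^sup>L lborel (\<lambda>x. c *\<^sub>R h (0 + c * x))" using c by simp
  also have "(\<lambda>x. c *\<^sub>R h (0 + c * x)) = (\<lambda>x. indicator {0<..} x *\<^sub>R (norm (complex_of_real (sqrt c) * f (c * x)))\<^sup>2)"
    using c by (auto simp: h_def indicator_def norm_mult power_mult_distrib zero_less_mult_iff)
  finally show ?thesis unfolding L2pos_normsq_def set_lebesgue_integral_def by simp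
qed

lemma hankel_scale:
  assumes om: "0 < mh_omega T" and t: "0 < t"
  defines "c \<equiv> exp (pi / mh_omega T)"
  shows "complex_of_real (sqrt c) * hankel_op (mh_kernel T (-A)) f (c * t)
       = - hankel_op (mh_kernel T A) (\<lambda>s. complex_of_real (sqrt c) * f (c * s)) t"
proof -
  have c: "0 < c" unfolding c_def by simp
  define H where "H s = indicator {0<..} s *\<^sub>R (complex_of_real (mh_kernel T (-A) (c * t + s)) * f s)" for s
  define J where "J x = indicator {0<..} x *\<^sub>R (complex_of_real (mh_kernel T A (t + x)) * f (c * x))" for x
  have "hankel_op (mh_kernel T (-A)) f (c * t) = integral\<^sup>L lborel H"
    unfolding hankel_op_def set_lebesgue_integral_def H_def ..
  also have "\<dots> = \<bar>c\<bar> *\<^sub>R integral\<^sup>L lborel (\<lambda>x. H (0 + c * x))"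
    by (rule lborel_integral_real_affine) (use c in simp)
  also have "(\<lambda>x. H (0 + c * x)) = (\<lambda>x. (- 1 / c) *\<^sub>R J x)"
  proof
    fix x
    show "H (0 + c * x) = (- 1 / c) *\<^sub>R J x"
    proof (cases "0 < x")
      case True
      have "c * t + c * x = c * (t + x)" by (simp add: algebra_simps)
      then have "mh_kernel T (-A) (c * t + c * x) = - mh_kernel T A (t + x) / c"
        using kernel_flip[OF om, of "t + x" A] True t unfolding c_def by simp
      then show ?thesis using True c unfolding H_def J_def
        by (simp add: zero_less_mult_iff scaleR_conv_of_real)
    next
      case False
      then show ?thesis using c unfolding H_def J_def by (simp add: zero_less_mult_iff)
    qed
  qed
  also have "\<bar>c\<bar> *\<^sub>R integral\<^sup>L lborel (\<lambda>x. (- 1 / c) *\<^sub>R J x) = - integral\<^sup>L lborel J"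
    using c by simp
  finally have L: "hankel_op (mh_kernel T (-A)) f (c * t) = - integral\<^sup>L lborel J" .
  have "hankel_op (mh_kernel T A) (\<lambda>s. complex_of_real (sqrt c) * f (c * s)) t
      = integral\<^sup>L lborel (\<lambda>x. complex_of_real (sqrt c) * J x)"
    unfolding hankel_op_def set_lebesgue_integral_def J_def
    by (rule arg_cong[where f="integral\<^sup>L lborel"]) (auto simp: fun_eq_iff scaleR_conv_of_real mult_ac)
  also have "\<dots> = complex_of_real (sqrt c) * integral\<^sup>L lborel J" by simp
  finally show ?thesis using L by simp
qed

lemma part2:
  assumes om: "0 < mh_omega T"
  shows "unitarily_equiv_L2pos (hankel_op (mh_kernel T (- A))) (\<lambda>f t. - hankel_op (mh_kernel T A) f t)"
proof -
  define c where "c = exp (pi / mh_omega T)"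
  have c: "0 < c" unfolding c_def by simp
  define U where "U f t = complex_of_real (sqrt c) * f (c * t)" for f :: "real \<Rightarrow> complex" and t
  show ?thesis unfolding unitarily_equiv_L2pos_def
  proof (intro exI[of _ U] conjI allI impI)
    fix f assume "L2pos f" then show "L2pos (U f)" unfolding U_def using L2pos_scale c by blast
  next
    fix f g :: "real \<Rightarrow> complex" and k
    show "ae_eq_pos (U (\<lambda>x. f x + k * g x)) (\<lambda>x. U f x + k * U g x)"
      unfolding ae_eq_pos_def U_def by (intro AE_I2) (simp add: algebra_simps)
  next
    fix f assume "L2pos f" then show "L2pos_normsq (U f) = L2pos_normsq f"
      unfolding U_def using normsq_scale c by blast
  next
    fix g assume g: "L2pos g"
    define f where "f t = complex_of_real (1 / sqrt c) * g ((1 / c) * t)" for t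
    have "L2pos f" unfolding f_def by (rule L2pos_scale[OF _ g]) (use c in simp)
    moreover have "ae_eq_pos (U f) g"
      unfolding ae_eq_pos_def U_def f_def using c by (intro AE_I2) (simp add: field_simps)
    ultimately show "\<exists>f. L2pos f \<and> ae_eq_pos (U f) g" by blast
  next
    fix f assume "L2pos f"
    show "ae_eq_pos (U (hankel_op (mh_kernel T (- A)) f)) (\<lambda>t. - hankel_op (mh_kernel T A) (U f) t)"
      unfolding ae_eq_pos_def U_def c_def by (intro AE_I2 impI hankel_scale[OF om])
  qed
qed


theorem lemma8p2:
  fixes T :: real
  assumes "0 < T"
  shows "(\<forall>s lam A. s \<notin> mh_Lambda T \<and> lam \<noteq> 0 \<longrightarrow>
            mh_Delta T s lam A = mh_Delta T s (- lam) (- A))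
       \<and> (\<forall>A. unitarily_equiv_L2pos (hankel_op (mh_kernel T (- A)))
                                    (\<lambda>f t. - hankel_op (mh_kernel T A) f t))
       \<and> (\<forall>s lam. s \<notin> mh_Lambda T \<and> lam \<noteq> 0 \<longrightarrow>
            mh_Delta T (s + complex_of_real (mh_omega T)) lam 0 = mh_Delta T s lam 0
          \<and> mh_Delta T (s + \<i>) lam 0 = mh_Delta T s lam 0)"
proof -
  have om: "0 < mh_omega T" using assms by (simp add: mh_omega_def)
  show ?thesis
    using part1 part2[OF om] part3w[OF om] part3i by blast
qed

end
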